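(* Run APAPC with $\eta=\frac1{4\tau L}$, $\theta=\frac1{\eta\lambda_{\max}(\mathbf{W})}$, $\alpha=\mu$, $\tau=\min\left\{1,\frac12\sqrt{\frac\mu L\frac{\lambda_{\max}(\mathbf{W})}{\lambda_{\min}^+(\mathbf{W})}}\right\}$, and define \[ \Psi^k := \frac1\eta\|x^k-x^*\|^2 + \Big\langle \big(\tfrac1\theta\mathbf{W}^\dagger - (1+\eta\alpha)^{-1}\eta\mathbf{I}\big)(y^k-y^* ),\,y^k-y^*\Big\rangle + \frac{2(1-\tau)}{\tau}\mathrm{D}_F(x_f^k,x^* ). \] Then for every $k\ge0$, \[ \Psi^{k+1}\le\left(1+\frac14\min\left\{\sqrt{\frac\mu L\frac{\lambda_{\min}^+(\mathbf{W})}{\lambda_{\max}(\mathbf{W})}},\ \frac{\lambda_{\min}^+(\mathbf{W})}{\lambda_{\max}(\mathbf{W})}\right\}\right)^{-1}\Psi^k. \]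
   Context: $F:\mathbb{R}^{nd}\to\mathbb{R}$ is differentiable, $\mu$-strongly convex and $L$-smooth, $0<\mu\le L$. $\mathbf{W}$ is a symmetric positive semidefinite $nd\times nd$ matrix whose kernel is the consensus space $\{(x_1,\dots,x_n)\in(\mathbb{R}^d)^n:x_1=\dots=x_n\}$, with largest eigenvalue $\lambda_{\max}(\mathbf{W})$ and smallest positive eigenvalue $\lambda_{\min}^+(\mathbf{W})$. $\mathbf{W}^\dagger$ is the inverse of $\mathbf{W}$ restricted to $\mathrm{range}(\mathbf{W})$. $x^*$ is the unique minimizer of $F$ over $\ker(\mathbf{W})$, $y^*:=-\nabla F(x^* )\in\mathrm{range}(\mathbf{W})$. $\mathrm{D}_F(u,v):=F(u)-F(v)-\langle\nabla F(v),u-v\rangle$. APAPC: given $x^0\in\mathbb{R}^{nd}$, $y^0\in\mathrm{range}(\mathbf{W})$, parameters $\eta,\theta,\alpha>0$, $\tau\in(0,1]$, set $x_f^0=x^0$ and for $k\ge0$: $x_g^k=\tau x^k+(1-\tau)x_f^k$; $x^{k+1/2}=(1+\eta\alpha)^{-1}(x^k-\eta(\nabla F(x_g^k)-\alpha x_g^k+y^k))$; $y^{k+1}=y^k+\theta\mathbf{W}x^{k+1/2}$; $x^{k+1}=(1+\eta\alpha)^{-1}(x^k-\eta(\nabla F(x_g^k)-\alpha x_g^k+y^{k+1}))$; $x_f^{k+1}=x_g^k+\frac{2\tau}{2-\tau}(x^{k+1}-x^k)$. *)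

theory Defs
  imports "HOL-Analysis.Analysis"
begin

text \<open>Points of (R^d)^n are modelled as elements of type real^'d^'n
  (n blocks, each in R^d); the norm/inner product is the Euclidean one on R^{nd}.\<close>

definition consensus :: "(real^'d^'n) set" where
  "consensus = {x. \<forall>i j. x $ i = x $ j}"

definition eigenvalues_of :: "('a::real_vector \<Rightarrow> 'a) \<Rightarrow> real set" where
  "eigenvalues_of W = {l. \<exists>v. v \<noteq> 0 \<and> W v = l *\<^sub>R v}"

definition lambda_max :: "('a::real_vector \<Rightarrow> 'a) \<Rightarrow> real" where
  "lambda_max W = Max (eigenvalues_of W)"

definition lambda_min_pos :: "('a::real_vector \<Rightarrow> 'a) \<Rightarrow> real" where
  "lambda_min_pos W = Min {l \<in> eigenvalues_of W. l > 0}"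

definition pinv :: "('a::real_vector \<Rightarrow> 'a) \<Rightarrow> 'a \<Rightarrow> 'a" where
  "pinv W y = (THE z. z \<in> range W \<and> W z = y)"

definition strongly_convex :: "real \<Rightarrow> ('a::real_inner \<Rightarrow> real) \<Rightarrow> bool" where
  "strongly_convex \<mu> F \<longleftrightarrow> convex_on UNIV (\<lambda>x. F x - \<mu> / 2 * (norm x)\<^sup>2)"

definition is_gradient :: "('a::real_inner \<Rightarrow> real) \<Rightarrow> ('a \<Rightarrow> 'a) \<Rightarrow> bool" where
  "is_gradient F gF \<longleftrightarrow> (\<forall>x. (F has_derivative (\<lambda>h. gF x \<bullet> h)) (at x))"

definition L_smooth :: "real \<Rightarrow> ('a::real_inner \<Rightarrow> 'a) \<Rightarrow> bool" where
  "L_smooth L gF \<longleftrightarrow> (\<forall>x y. norm (gF x - gF y) \<le> L * norm (x - y))"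

definition bregman :: "('a::real_inner \<Rightarrow> real) \<Rightarrow> ('a \<Rightarrow> 'a) \<Rightarrow> 'a \<Rightarrow> 'a \<Rightarrow> real" where
  "bregman F gF u v = F u - F v - gF v \<bullet> (u - v)"

end

theory Submission
  imports Defs
begin
lemma deriv_line:
  fixes F :: "'a::real_inner \<Rightarrow> real"
  assumes grad: "is_gradient F gF"
  shows "((\<lambda>t. F (v + t *\<^sub>R h)) has_real_derivative (gF (v + t *\<^sub>R h) \<bullet> h)) (at t within S)"
proof -
  have l: "((\<lambda>t::real. v + t *\<^sub>R h) has_derivative (\<lambda>s. s *\<^sub>R h)) (at t within S)"
    by (auto intro!: derivative_eq_intros)
  have f: "(F has_derivative (\<lambda>k. gF (v + t *\<^sub>R h) \<bullet> k)) (at (v + t *\<^sub>R h))"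
    using grad unfolding is_gradient_def by blast
  have "((\<lambda>t. F (v + t *\<^sub>R h)) has_derivative (\<lambda>s. gF (v + t *\<^sub>R h) \<bullet> (s *\<^sub>R h))) (at t within S)"
    by (rule has_derivative_compose[OF l f])
  then show ?thesis
    unfolding has_field_derivative_def
    by (rule has_derivative_eq_rhs) (simp add: fun_eq_iff mult.commute)
qed

lemma smooth_ub:
  fixes F :: "'a::real_inner \<Rightarrow> real"
  assumes grad: "is_gradient F gF" and sm: "L_smooth L gF"
  shows "F u - F v - gF v \<bullet> (u - v) \<le> L / 2 * (norm (u - v))\<^sup>2"
proof -
  define h where "h = u - v"
  define \<phi> where "\<phi> t = F (v + t *\<^sub>R h) - t * (gF v \<bullet> h) - L / 2 * t\<^sup>2 * (norm h)\<^sup>2" for t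
  have d: "DERIV \<phi> t :> (gF (v + t *\<^sub>R h) \<bullet> h - gF v \<bullet> h - L * t * (norm h)\<^sup>2)" for t
    unfolding \<phi>_def
    by (rule derivative_eq_intros deriv_line[OF grad] refl)+ (simp add: power2_eq_square)
  obtain z where z: "0 < z" "z < 1" "\<phi> 1 - \<phi> 0 = (1 - 0) * (gF (v + z *\<^sub>R h) \<bullet> h - gF v \<bullet> h - L * z * (norm h)\<^sup>2)"
    using MVT2[of 0 1 \<phi>, OF _ d] by auto
  have "gF (v + z *\<^sub>R h) \<bullet> h - gF v \<bullet> h = (gF (v + z *\<^sub>R h) - gF v) \<bullet> h"
    by (simp add: inner_diff_left)
  also have "\<dots> \<le> norm (gF (v + z *\<^sub>R h) - gF v) * norm h"
    by (rule norm_cauchy_schwarz)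
  also have "\<dots> \<le> L * norm (z *\<^sub>R h) * norm h"
    using sm unfolding L_smooth_def by (metis add_diff_cancel_left' mult_right_mono norm_ge_zero)
  also have "\<dots> = L * z * (norm h)\<^sup>2" using z by (simp add: power2_eq_square)
  finally have "\<phi> 1 \<le> \<phi> 0" using z by simp
  then show ?thesis unfolding \<phi>_def h_def by simp
qed

lemma convex_tangent:
  fixes G :: "'a::real_inner \<Rightarrow> real"
  assumes cv: "convex_on UNIV G" and dG: "\<And>x. (G has_derivative (\<lambda>h. dG x \<bullet> h)) (at x)"
  shows "G x + dG x \<bullet> (y - x) \<le> G y"
proof -
  define h where "h = y - x"
  define \<psi> where "\<psi> t = G (x + t *\<^sub>R h)" for t
  have cvp: "convex_on UNIV \<psi>"
  proof (rule convex_onI)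
    fix s t u :: real assume u: "0 < u" "u < 1"
    have "\<psi> ((1 - u) *\<^sub>R s + u *\<^sub>R t) = G ((1 - u) *\<^sub>R (x + s *\<^sub>R h) + u *\<^sub>R (x + t *\<^sub>R h))"
      unfolding \<psi>_def by (simp add: algebra_simps)
    also have "\<dots> \<le> (1 - u) * G (x + s *\<^sub>R h) + u * G (x + t *\<^sub>R h)"
      using cv u unfolding convex_on_def by auto
    finally show "\<psi> ((1 - u) *\<^sub>R s + u *\<^sub>R t) \<le> (1 - u) * \<psi> s + u * \<psi> t" unfolding \<psi>_def .
  qed (simp)
  have d: "(\<psi> has_field_derivative (dG x \<bullet> h)) (at 0 within UNIV)"
  proof -
    have l: "((\<lambda>t::real. x + t *\<^sub>R h) has_derivative (\<lambda>s. s *\<^sub>R h)) (at 0)"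
      by (auto intro!: derivative_eq_intros)
    have f: "(G has_derivative (\<lambda>k. dG x \<bullet> k)) (at (x + 0 *\<^sub>R h))" using dG by simp
    have "((\<lambda>t. G (x + t *\<^sub>R h)) has_derivative (\<lambda>s. dG x \<bullet> (s *\<^sub>R h))) (at 0)"
      by (rule has_derivative_compose[OF l f])
    then show ?thesis unfolding has_field_derivative_def \<psi>_def by (rule has_derivative_eq_rhs) (simp add: fun_eq_iff mult.commute)
  qed
  have "\<psi> 1 - \<psi> 0 \<ge> (dG x \<bullet> h) * (1 - 0)"
    by (rule convex_on_imp_above_tangent[OF cvp]) (use d in auto)
  then show ?thesis unfolding \<psi>_def h_def by simp
qed

lemma sconv_lb:
  fixes F :: "'a::real_inner \<Rightarrow> real"
  assumes grad: "is_gradient F gF" and sc: "strongly_convex \<mu> F"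
  shows "\<mu> / 2 * (norm (u - v))\<^sup>2 \<le> bregman F gF u v"
proof -
  define G where "G x = F x - \<mu> / 2 * (x \<bullet> x)" for x
  have cv: "convex_on UNIV G" using sc unfolding strongly_convex_def G_def
    by (simp add: power2_norm_eq_inner)
  have dG: "(G has_derivative (\<lambda>h. (gF x - \<mu> *\<^sub>R x) \<bullet> h)) (at x)" for x
  proof -
    have "(G has_derivative (\<lambda>h. gF x \<bullet> h - \<mu> / 2 * (x \<bullet> h + h \<bullet> x))) (at x)"
      unfolding G_def
      using grad unfolding is_gradient_def
      by (auto intro!: derivative_eq_intros)
    then show ?thesis
      by (rule has_derivative_eq_rhs) (auto simp: inner_diff_left inner_diff_right inner_commute fun_eq_iff)
  qed
  have "G v + (gF v - \<mu> *\<^sub>R v) \<bullet> (u - v) \<le> G u" by (rule convex_tangent[OF cv dG])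
  then have "\<mu> / 2 * ((u - v) \<bullet> (u - v)) \<le> F u - F v - gF v \<bullet> (u - v)"
    unfolding G_def by (simp add: algebra_simps inner_diff_left inner_diff_right inner_commute)
  then show ?thesis unfolding bregman_def by (simp add: power2_norm_eq_inner)
qed



lemma quad0:
  fixes b c :: real
  assumes h: "\<And>t. 0 \<le> t * b + t\<^sup>2 * c" and c: "0 \<le> c"
  shows "b = 0"
proof (rule ccontr)
  assume b: "b \<noteq> 0"
  define t where "t = - b / (c + 1)"
  have "0 \<le> t * b + t\<^sup>2 * c" by (rule h)
  have c1: "c + 1 > 0" using c by simp
  have e: "t * (c + 1) = - b" unfolding t_def using c1 by simp
  have "(c + 1)\<^sup>2 * (t * b + t\<^sup>2 * c) = (t * (c + 1)) * b * (c + 1) + (t * (c + 1))\<^sup>2 * c"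
    by (simp add: algebra_simps power2_eq_square)
  also have "\<dots> = - b\<^sup>2" unfolding e by (simp add: algebra_simps power2_eq_square)
  finally have "(c + 1)\<^sup>2 * (t * b + t\<^sup>2 * c) < 0" using b by simp
  moreover have "0 \<le> (c + 1)\<^sup>2 * (t * b + t\<^sup>2 * c)" using h[of t] by simp
  ultimately show False by simp
qed

lemma quad_cs:
  fixes A B C :: real
  assumes h: "\<And>t. 0 \<le> A + 2 * t * B + t\<^sup>2 * C" and c: "0 \<le> C"
  shows "B\<^sup>2 \<le> A * C"
proof (cases "C = 0")
  case True
  show ?thesis
  proof (cases "B = 0")
    case False
    have "0 \<le> A + 2 * (-(A + 1) / (2 * B)) * B + (-(A + 1) / (2 * B))\<^sup>2 * C" by (rule h)
    also have "\<dots> = -1" using False True by (simp add: field_simps)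
    finally show ?thesis by simp
  qed (use True in simp)
next
  case False
  then have C: "C > 0" using c by simp
  have "0 \<le> A + 2 * (- B / C) * B + (- B / C)\<^sup>2 * C" by (rule h)
  also have "\<dots> = (A * C - B\<^sup>2) / C" using C by (simp add: field_simps power2_eq_square)
  finally show ?thesis using C by (simp add: divide_nonneg_pos zero_le_divide_iff)
qed

lemma cocoercive:
  fixes F :: "'a::real_inner \<Rightarrow> real"
  assumes grad: "is_gradient F gF" and sm: "L_smooth L gF" and L: "0 < L"
    and cvx: "\<And>u v. 0 \<le> bregman F gF u v"
  shows "(norm (gF x - gF y))\<^sup>2 / (2 * L) \<le> bregman F gF x y"
proof -
  define G where "G = gF x - gF y"
  define z where "z = x - (1 / L) *\<^sub>R G"
  have 1: "0 \<le> F z - F y - gF y \<bullet> (z - y)" using cvx[of z y] unfolding bregman_def .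
  have 2: "F z - F x - gF x \<bullet> (z - x) \<le> L / 2 * (norm (z - x))\<^sup>2" by (rule smooth_ub[OF grad sm])
  have zx: "z - x = - (1 / L) *\<^sub>R G" unfolding z_def by simp
  have n: "(norm (z - x))\<^sup>2 = (G \<bullet> G) / L\<^sup>2" unfolding zx
    by (simp add: power2_eq_square divide_simps flip: power2_norm_eq_inner)
  have a: "gF y \<bullet> (z - y) = gF y \<bullet> (x - y) - (1 / L) * (gF y \<bullet> G)"
    unfolding z_def by (simp add: inner_diff_right)
  have b: "gF x \<bullet> (z - x) = - (1 / L) * (gF x \<bullet> G)" unfolding zx by simp
  have c: "gF x \<bullet> G - gF y \<bullet> G = G \<bullet> G" unfolding G_def by (simp add: inner_diff_left)
  have "L / 2 * ((G \<bullet> G) / L\<^sup>2) = (G \<bullet> G) / (2 * L)" using L by (simp add: field_simps power2_eq_square)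
  with 1 2 n a b have "F x - F y - gF y \<bullet> (x - y) \<ge> (1 / L) * (gF x \<bullet> G - gF y \<bullet> G) - (G \<bullet> G) / (2 * L)"
    by (simp add: algebra_simps)
  also have "(1 / L) * (gF x \<bullet> G - gF y \<bullet> G) - (G \<bullet> G) / (2 * L) = (G \<bullet> G) / (2 * L)"
    unfolding c using L by (simp add: field_simps)
  finally show ?thesis unfolding bregman_def G_def by (simp add: power2_norm_eq_inner)
qed

lemma optimality:
  fixes F :: "'a::real_inner \<Rightarrow> real"
  assumes grad: "is_gradient F gF" and sm: "L_smooth L gF" and L: "0 \<le> L"
    and opt: "\<And>t::real. F xs \<le> F (xs + t *\<^sub>R h)"
  shows "gF xs \<bullet> h = 0"
proof -
  have "0 \<le> t * (gF xs \<bullet> h) + t\<^sup>2 * (L / 2 * (norm h)\<^sup>2)" for t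
  proof -
    have "F (xs + t *\<^sub>R h) - F xs - gF xs \<bullet> (xs + t *\<^sub>R h - xs) \<le> L / 2 * (norm (xs + t *\<^sub>R h - xs))\<^sup>2"
      by (rule smooth_ub[OF grad sm])
    then show ?thesis using opt[of t] by (simp add: power_mult_distrib algebra_simps)
  qed
  then show ?thesis by (rule quad0) (use L in simp)
qed



locale symop =
  fixes W :: "'a::euclidean_space \<Rightarrow> 'a"
  assumes lin: "linear W"
    and sym: "\<And>u v. W u \<bullet> v = u \<bullet> W v"
    and psd: "\<And>u. 0 \<le> W u \<bullet> u"
begin

lemma Wadd: "W (u + v) = W u + W v" using lin by (simp add: linear_add)
lemma Wdiff: "W (u - v) = W u - W v" using lin by (simp add: linear_diff)
lemma Wscale: "W (c *\<^sub>R u) = c *\<^sub>R W u" using lin by (simp add: linear_scale)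
lemma W0: "W 0 = 0" using lin by (simp add: linear_0)

lemma subspace_range: "subspace (range W)"
  using linear_subspace_image[OF lin subspace_UNIV] by simp

lemma range_ker: assumes "u \<in> range W" "W u = 0" shows "u = 0"
proof -
  obtain w where u: "u = W w" using assms(1) by auto
  have "u \<bullet> u = w \<bullet> W u" using sym[of w u] u by simp
  then show ?thesis using assms(2) by simp
qed

lemma perp_range: assumes "\<And>w. v \<bullet> W w = 0" shows "W v = 0"
proof -
  have "W v \<bullet> W v = v \<bullet> W (W v)" by (rule sym)
  then show ?thesis using assms[of "W v"] by simp
qed

lemma decomp:
  obtains y z where "y \<in> range W" "W z = 0" "\<And>w. z \<bullet> W w = 0" "x = y + z"
proof -
  obtain y z where y: "y \<in> span (range W)" and z: "\<And>w. w \<in> span (range W) \<Longrightarrow> orthogonal z w"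
    and x: "x = y + z"
    using orthogonal_subspace_decomp_exists[of "range W" x] by blast
  have sp: "span (range W) = range W" using subspace_range by simp
  have zw: "z \<bullet> W w = 0" for w using z[of "W w"] sp unfolding orthogonal_def by auto
  have yr: "y \<in> range W" using y sp by simp
  have Wz: "W z = 0" by (rule perp_range, rule zw)
  show ?thesis by (rule that[OF yr Wz zw x])
qed

lemma range_pre: assumes "y \<in> range W" shows "\<exists>z\<in>range W. W z = y"
proof -
  obtain w where w: "y = W w" using assms by auto
  obtain a b where "a \<in> range W" "W b = 0" "\<And>u. b \<bullet> W u = 0" "w = a + b"
    by (rule decomp[of w], rule that, assumption+)
  then show ?thesis using w Wadd by auto
qed

lemma perp_ker: assumes "\<And>u. W u = 0 \<Longrightarrow> v \<bullet> u = 0" shows "v \<in> range W"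
proof -
  obtain a b where a: "a \<in> range W" and b: "W b = 0" "\<And>w. b \<bullet> W w = 0" and v: "v = a + b"
    by (rule decomp[of v], rule that, assumption+)
  have "a \<bullet> b = 0" using a b(2) by (auto simp: inner_commute)
  moreover have "v \<bullet> b = 0" using assms b(1) by simp
  ultimately have "b \<bullet> b = 0" using v by (simp add: inner_add_left)
  then show ?thesis using v a by simp
qed

lemma pinv_unique: assumes "z1 \<in> range W" "z2 \<in> range W" "W z1 = W z2" shows "z1 = z2"
proof -
  have "z1 - z2 \<in> range W" using subspace_range assms by (simp add: subspace_diff)
  moreover have "W (z1 - z2) = 0" using assms Wdiff by simp
  ultimately have "z1 - z2 = 0" by (rule range_ker)
  then show ?thesis by simp
qed

lemma pinv: assumes "y \<in> range W" shows "pinv W y \<in> range W \<and> W (pinv W y) = y"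
proof -
  obtain z where z: "z \<in> range W" "W z = y" using range_pre[OF assms] by blast
  have "\<exists>!z. z \<in> range W \<and> W z = y"
  proof (rule ex1I[of _ z])
    show "z \<in> range W \<and> W z = y" using z by simp
    fix z' assume z': "z' \<in> range W \<and> W z' = y"
    show "z' = z" using pinv_unique[of z' z] z z' by simp
  qed
  then show ?thesis unfolding pinv_def by (rule theI')
qed

lemma pinv_eq: assumes "z \<in> range W" "W z = y" shows "pinv W y = z"
proof -
  have yr: "y \<in> range W" unfolding assms(2)[symmetric] by (rule rangeI)
  have p: "pinv W y \<in> range W" "W (pinv W y) = y" using pinv[OF yr] by simp_all
  show ?thesis using pinv_unique[of "pinv W y" z] p assms by simp
qed

lemma pinv_diff: assumes "u \<in> range W" "v \<in> range W" shows "pinv W (u - v) = pinv W u - pinv W v"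
proof (rule pinv_eq)
  have pu: "pinv W u \<in> range W" "W (pinv W u) = u" using pinv[OF assms(1)] by simp_all
  have pv: "pinv W v \<in> range W" "W (pinv W v) = v" using pinv[OF assms(2)] by simp_all
  show "pinv W u - pinv W v \<in> range W" using pu pv subspace_range by (simp add: subspace_diff)
  show "W (pinv W u - pinv W v) = u - v" using pu pv by (simp add: Wdiff)
qed

lemma pinv_sym: assumes "u \<in> range W" "v \<in> range W" shows "pinv W u \<bullet> v = u \<bullet> pinv W v"
proof -
  have "pinv W u \<bullet> v = pinv W u \<bullet> W (pinv W v)" using pinv[OF assms(2)] by simp
  also have "\<dots> = W (pinv W u) \<bullet> pinv W v" by (simp add: sym)
  also have "\<dots> = u \<bullet> pinv W v" using pinv[OF assms(1)] by simp
  finally show ?thesis .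
qed

lemma variational:
  assumes S: "subspace S" and WS: "\<And>u. u \<in> S \<Longrightarrow> W u \<in> S" and v: "v \<in> S"
    and s: "s \<noteq> 0"
    and Q: "\<And>u. u \<in> S \<Longrightarrow> 0 \<le> s * (c * (u \<bullet> u) - W u \<bullet> u)"
    and Qv: "s * (c * (v \<bullet> v) - W v \<bullet> v) = 0"
  shows "W v = c *\<^sub>R v"
proof -
  have Qv': "c * (v \<bullet> v) = W v \<bullet> v" using Qv s by simp
  define h where "h = c *\<^sub>R v - W v"
  have hS: "h \<in> S" unfolding h_def using S v WS by (simp add: subspace_diff subspace_scale)
  have "0 \<le> t * (2 * s * (h \<bullet> h)) + t\<^sup>2 * (s * (c * (h \<bullet> h) - W h \<bullet> h))" for t
  proof -
    have "v + t *\<^sub>R h \<in> S" using S v hS by (simp add: subspace_add subspace_scale)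
    then have "0 \<le> s * (c * ((v + t *\<^sub>R h) \<bullet> (v + t *\<^sub>R h)) - W (v + t *\<^sub>R h) \<bullet> (v + t *\<^sub>R h))"
      by (rule Q)
    also have "\<dots> = s * (c * (v \<bullet> v) - W v \<bullet> v) + 2 * t * s * (c * (v \<bullet> h) - W v \<bullet> h)
         + t\<^sup>2 * (s * (c * (h \<bullet> h) - W h \<bullet> h))"
      by (simp add: Wadd Wscale inner_add_left inner_add_right sym[of h v] inner_commute[of h v] inner_commute[of "W v" h]
          algebra_simps power2_eq_square)
    also have "c * (v \<bullet> h) - W v \<bullet> h = h \<bullet> h" unfolding h_def
      by (simp add: inner_diff_left inner_diff_right inner_commute[of v "W v"] algebra_simps)
    finally show ?thesis using Qv' by (simp add: algebra_simps)
  qed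
  then have "2 * s * (h \<bullet> h) = 0" by (rule quad0) (use Q[OF hS] in simp)
  then have "h = 0" using s by simp
  then show ?thesis unfolding h_def by simp
qed

lemma eig_finite: "finite (eigenvalues_of W)"
proof -
  define E where "E = eigenvalues_of W"
  define ev where "ev l = (SOME v. v \<noteq> 0 \<and> W v = l *\<^sub>R v)" for l
  have evp: "ev l \<noteq> 0 \<and> W (ev l) = l *\<^sub>R ev l" if "l \<in> E" for l
  proof -
    have "\<exists>v. v \<noteq> 0 \<and> W v = l *\<^sub>R v" using that unfolding E_def eigenvalues_of_def by simp
    then show ?thesis unfolding ev_def by (rule someI_ex)
  qed
  have inj: "inj_on ev E"
  proof (rule inj_onI)
    fix l1 l2 assume l: "l1 \<in> E" "l2 \<in> E" "ev l1 = ev l2"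
    have e1: "W (ev l1) = l1 *\<^sub>R ev l1" using evp[OF l(1)] by blast
    have e2: "W (ev l2) = l2 *\<^sub>R ev l2" using evp[OF l(2)] by blast
    have "l1 *\<^sub>R ev l1 = W (ev l1)" using e1 by simp
    also have "\<dots> = l2 *\<^sub>R ev l1" using e2 unfolding l(3) .
    finally have "l1 *\<^sub>R ev l1 = l2 *\<^sub>R ev l1" .
    moreover have "ev l1 \<noteq> 0" using evp[OF l(1)] by blast
    ultimately show "l1 = l2" by (simp add: scaleR_cancel_right)
  qed
  have po: "pairwise orthogonal (ev ` E)"
  proof (rule pairwiseI)
    fix a b assume ab: "a \<in> ev ` E" "b \<in> ev ` E" "a \<noteq> b"
    obtain l1 where l1: "l1 \<in> E" "a = ev l1" using ab(1) by (rule imageE)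
    obtain l2 where l2: "l2 \<in> E" "b = ev l2" using ab(2) by (rule imageE)
    have ne: "l1 \<noteq> l2" using ab(3) l1 l2 by blast
    have e1: "W a = l1 *\<^sub>R a" using evp[OF l1(1)] l1(2) by blast
    have e2: "W b = l2 *\<^sub>R b" using evp[OF l2(1)] l2(2) by blast
    have "l1 * (a \<bullet> b) = W a \<bullet> b" using e1 by simp
    also have "\<dots> = a \<bullet> W b" by (rule sym)
    also have "\<dots> = l2 * (a \<bullet> b)" using e2 by simp
    finally have "(l1 - l2) * (a \<bullet> b) = 0" by (simp add: algebra_simps)
    then show "orthogonal a b" using ne unfolding orthogonal_def by simp
  qed
  have z: "0 \<notin> ev ` E"
  proof
    assume "0 \<in> ev ` E"
    then obtain l where l: "l \<in> E" "0 = ev l" by (rule imageE)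
    then show False using evp[OF l(1)] by simp
  qed
  have "finite (ev ` E)" by (rule independent_imp_finite[OF pairwise_orthogonal_independent[OF po z]])
  then have "finite E" by (rule finite_imageD[OF _ inj])
  then show ?thesis unfolding E_def .
qed

lemma scale_bound:
  assumes S: "subspace S" and hyp: "\<And>u. u \<in> S \<Longrightarrow> norm u = 1 \<Longrightarrow> P (W u \<bullet> u)"
    and Pm: "\<And>x r. r > 0 \<Longrightarrow> P x \<Longrightarrow> P' (r\<^sup>2 * x) (r\<^sup>2)" and P0: "P' 0 0"
    and u: "u \<in> S"
  shows "P' (W u \<bullet> u) (u \<bullet> u)"
proof (cases "u = 0")
  case True then show ?thesis using P0 W0 by simp
next
  case False
  define w where "w = (1 / norm u) *\<^sub>R u"
  have w: "w \<in> S" "norm w = 1" unfolding w_def using S u False by (auto simp: subspace_scale)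
  have "P' ((norm u)\<^sup>2 * (W w \<bullet> w)) ((norm u)\<^sup>2)" using Pm[OF _ hyp[OF w]] False by simp
  moreover have "(norm u)\<^sup>2 * (W w \<bullet> w) = W u \<bullet> u" unfolding w_def using False
    by (simp add: Wscale power2_eq_square)
  ultimately show ?thesis by (simp add: power2_norm_eq_inner)
qed

lemma lmax:
  shows "lambda_max W \<in> eigenvalues_of W" "\<And>u. W u \<bullet> u \<le> lambda_max W * (u \<bullet> u)"
proof -
  have cont: "continuous_on (sphere 0 1) (\<lambda>u. W u \<bullet> u)"
    using lin by (intro continuous_intros linear_continuous_on) (simp_all add: linear_conv_bounded_linear)
  obtain v where v: "v \<in> sphere 0 1" and vmax: "\<And>u. u \<in> sphere 0 1 \<Longrightarrow> W u \<bullet> u \<le> W v \<bullet> v"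
    using continuous_attains_sup[OF compact_sphere _ cont] by auto
  define c where "c = W v \<bullet> v"
  have bnd: "W u \<bullet> u \<le> c * (u \<bullet> u)" for u
    by (rule scale_bound[of UNIV "\<lambda>x. x \<le> c" "\<lambda>x r. x \<le> c * r"])
       (use vmax in \<open>auto simp: c_def subspace_UNIV\<close>)
  have vv: "v \<bullet> v = 1" using v by (simp add: dot_square_norm)
  have "W v = c *\<^sub>R v"
    by (rule variational[of UNIV v 1]) (use bnd vv in \<open>auto simp: subspace_UNIV c_def\<close>)
  moreover have "v \<noteq> 0" using v by auto
  ultimately have cE: "c \<in> eigenvalues_of W" unfolding eigenvalues_of_def by blast
  have "l \<le> c" if l: "l \<in> eigenvalues_of W" for l
  proof -
    have "\<exists>e. e \<noteq> 0 \<and> W e = l *\<^sub>R e" using l by (simp add: eigenvalues_of_def)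
    then obtain e where e: "e \<noteq> 0" "W e = l *\<^sub>R e" by blast
    have "l * (e \<bullet> e) \<le> c * (e \<bullet> e)" using bnd[of e] e by simp
    then show ?thesis using e by simp
  qed
  then have "lambda_max W = c" unfolding lambda_max_def by (intro Max_eqI eig_finite cE)
  then show "lambda_max W \<in> eigenvalues_of W" "\<And>u. W u \<bullet> u \<le> lambda_max W * (u \<bullet> u)"
    using cE bnd by auto
qed

lemma lmin:
  assumes nz: "\<exists>u. W u \<noteq> 0"
  shows "lambda_min_pos W > 0" "\<And>u. u \<in> range W \<Longrightarrow> lambda_min_pos W * (u \<bullet> u) \<le> W u \<bullet> u"
    "lambda_min_pos W \<le> lambda_max W"
proof -
  define S where "S = sphere (0::'a) 1 \<inter> range W"
  have cont: "continuous_on S (\<lambda>u. W u \<bullet> u)"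
    using lin by (intro continuous_intros linear_continuous_on) (simp_all add: linear_conv_bounded_linear)
  obtain u0 where u0: "W u0 \<noteq> 0" using nz by blast
  have e0: "(1 / norm (W u0)) *\<^sub>R W u0 = W ((1 / norm (W u0)) *\<^sub>R u0)" by (simp add: Wscale)
  have "(1 / norm (W u0)) *\<^sub>R W u0 \<in> range W" unfolding e0 by (rule rangeI)
  moreover have "norm ((1 / norm (W u0)) *\<^sub>R W u0) = 1" using u0 by simp
  ultimately have "(1 / norm (W u0)) *\<^sub>R W u0 \<in> S" unfolding S_def by simp
  then have Sne: "S \<noteq> {}" by blast
  have Sc: "compact S" unfolding S_def
    by (rule compact_Int_closed[OF compact_sphere closed_subspace[OF subspace_range]])
  obtain v where v: "v \<in> S" and vmin: "\<And>u. u \<in> S \<Longrightarrow> W v \<bullet> v \<le> W u \<bullet> u"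
    using continuous_attains_inf[OF Sc Sne cont] by blast
  define c where "c = W v \<bullet> v"
  have bnd: "c * (u \<bullet> u) \<le> W u \<bullet> u" if u: "u \<in> range W" for u
  proof (rule scale_bound[of "range W" "\<lambda>x. c \<le> x" "\<lambda>x r. c * r \<le> x"])
    show "subspace (range W)" by (rule subspace_range)
    show "u \<in> range W" by (rule u)
    show "c * 0 \<le> 0" by simp
    show "c \<le> W w \<bullet> w" if "w \<in> range W" "norm w = 1" for w
      using vmin[of w] that unfolding c_def S_def by simp
    show "c * r\<^sup>2 \<le> r\<^sup>2 * x" if "r > 0" "c \<le> x" for x r
      using that by (simp add: mult.commute mult_right_mono)
  qed
  have vv: "v \<bullet> v = 1" using v by (simp add: S_def dot_square_norm)
  have vr: "v \<in> range W" using v S_def by auto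
  have "W v = c *\<^sub>R v"
    by (rule variational[of "range W" v "-1"]) (use bnd vv vr subspace_range in \<open>auto simp: c_def\<close>)
  moreover have "v \<noteq> 0" using v S_def by auto
  ultimately have cE: "c \<in> eigenvalues_of W" unfolding eigenvalues_of_def by blast
  have cpos: "c > 0"
  proof (rule ccontr)
    assume "\<not> c > 0"
    moreover have "c \<ge> 0" unfolding c_def by (rule psd)
    ultimately have "c = 0" by simp
    then have "W v = 0" using \<open>W v = c *\<^sub>R v\<close> by simp
    then show False using range_ker[OF vr] \<open>v \<noteq> 0\<close> by simp
  qed
  have "c \<le> l" if l: "l \<in> {l \<in> eigenvalues_of W. l > 0}" for l
  proof -
    have "l > 0" using l by simp
    moreover have "\<exists>e. e \<noteq> 0 \<and> W e = l *\<^sub>R e" using l by (simp add: eigenvalues_of_def)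
    moreover obtain e where "e \<noteq> 0" "W e = l *\<^sub>R e" using calculation(2) by blast
    ultimately have e: "e \<noteq> 0" "W e = l *\<^sub>R e" "l > 0" by blast+
    have "e = W ((1 / l) *\<^sub>R e)" using e by (simp add: Wscale)
    then have "e \<in> range W" by (metis rangeI)
    then have "c * (e \<bullet> e) \<le> l * (e \<bullet> e)" using bnd[of e] e by simp
    then show ?thesis using e by simp
  qed
  note lb = this
  have fin: "finite {l \<in> eigenvalues_of W. l > 0}" using eig_finite by simp
  have cin: "c \<in> {l \<in> eigenvalues_of W. l > 0}" using cE cpos by simp
  have eq: "lambda_min_pos W = c" unfolding lambda_min_pos_def
    by (rule Min_eqI[OF fin lb cin])
  show "lambda_min_pos W > 0" using eq cpos by simp
  show "\<And>u. u \<in> range W \<Longrightarrow> lambda_min_pos W * (u \<bullet> u) \<le> W u \<bullet> u" using eq bnd by simp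
  have "W v \<bullet> v \<le> lambda_max W * (v \<bullet> v)" by (rule lmax(2))
  then have "c \<le> lambda_max W" by (simp add: vv c_def)
  then show "lambda_min_pos W \<le> lambda_max W" using eq by simp
qed

end


lemma params:
  fixes \<mu> L lm lp \<tau> \<eta> \<delta> r :: real
  assumes mu: "0 < \<mu>" "\<mu> \<le> L" and lp: "0 < lp" "lp \<le> lm"
    and tau: "\<tau> = min 1 (1/2 * sqrt (\<mu> / L * (lm / lp)))"
    and eta: "\<eta> = 1 / (4 * \<tau> * L)"
    and delta: "\<delta> = 1/4 * min (sqrt (\<mu> / L * (lp / lm))) (lp / lm)"
    and r: "r = lp / lm"
  shows "0 < \<tau>" "\<tau> \<le> 1" "\<delta> \<le> \<eta> * \<mu>" "2 * \<delta> * (1 - \<tau>) \<le> \<tau>" "\<delta> \<le> r / 4"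
    "\<delta> \<le> \<tau> * r / 2" "\<eta> * \<mu> \<le> 1" "0 \<le> \<delta>" "0 < r" "r \<le> 1" "0 < \<eta>"
proof -
  have L: "0 < L" using mu by simp
  have lm: "0 < lm" using lp by simp
  show r0: "0 < r" "r \<le> 1" using lp lm r by auto
  define q where "q = sqrt (\<mu> / L * (lm / lp))"
  have q0: "0 < q" unfolding q_def using mu L lp lm by simp
  have qsq: "q\<^sup>2 = \<mu> / L / r" unfolding q_def r using mu L lp lm by simp
  have p: "sqrt (\<mu> / L * (lp / lm)) = r * q"
  proof (rule real_sqrt_unique)
    show "0 \<le> r * q" using r0 q0 by simp
    have "(r * q)\<^sup>2 = r\<^sup>2 * q\<^sup>2" by (simp add: power_mult_distrib)
    also have "\<dots> = \<mu> / L * (lp / lm)" unfolding qsq using r0 r by (simp add: power2_eq_square field_simps)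
    finally show "(r * q)\<^sup>2 = \<mu> / L * (lp / lm)" .
  qed
  have muL: "\<mu> / L = r * q\<^sup>2" using qsq r0 by (simp add: field_simps)
  have muL1: "\<mu> / L \<le> 1" using mu L by simp
  have mm: "min (r * q) r = r * min q 1" using r0 by (simp add: min_def)
  have dl: "\<delta> = r / 4 * min q 1" unfolding delta p unfolding r[symmetric] mm by simp
  have tq: "\<tau> = min 1 (q / 2)" unfolding tau q_def[symmetric] by simp
  show t0: "0 < \<tau>" using tq q0 by simp
  show t1: "\<tau> \<le> 1" using tq by simp
  have emu: "\<eta> * \<mu> = \<mu> / L / (4 * \<tau>)" unfolding eta using L t0 by (simp add: field_simps)
  show "0 < \<eta>" unfolding eta using t0 L by simp
  show d0: "0 \<le> \<delta>" unfolding dl using r0 q0 by simp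
  show "\<delta> \<le> r / 4" unfolding dl using r0 by (simp add: min_def)
  have main: "\<delta> \<le> \<eta> * \<mu> \<and> 2 * \<delta> * (1 - \<tau>) \<le> \<tau> \<and> \<delta> \<le> \<tau> * r / 2 \<and> \<eta> * \<mu> \<le> 1"
  proof (cases "q \<ge> 2")
    case True
    then have tt: "\<tau> = 1" using tq by simp
    have d: "\<delta> = r / 4" unfolding dl using True by simp
    have "r \<le> r * q\<^sup>2 / 4"
    proof -
      have "4 \<le> q\<^sup>2" using True by (metis power2_eq_square real_sqrt_four real_sqrt_le_iff sqrt_le_D)
      then show ?thesis using r0 by simp
    qed
    then have "\<delta> \<le> \<eta> * \<mu>" unfolding emu muL tt d using r0 by simp
    moreover have "\<eta> * \<mu> \<le> 1" unfolding emu tt using muL1 mu L by simp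
    ultimately show ?thesis unfolding tt d using r0 by simp
  next
    case False
    then have tt: "\<tau> = q / 2" using tq by simp
    have d: "\<delta> \<le> r * q / 4" unfolding dl using r0 q0 by (simp add: min_def)
    have e: "\<eta> * \<mu> = r * q / 2" unfolding emu muL tt using q0 by (simp add: power2_eq_square field_simps)
    have "\<delta> \<le> \<eta> * \<mu>" unfolding e using d d0 r0 q0 by simp
    moreover have "2 * \<delta> * (1 - \<tau>) \<le> \<tau>"
    proof -
      have rq: "r * q \<le> q" using r0 q0 by (simp add: mult_le_cancel_right1)
      have "2 * \<delta> \<le> \<tau>" using d rq tt by simp
      moreover have "2 * \<delta> * (1 - \<tau>) \<le> 2 * \<delta>" using d0 t0 by (simp add: mult_left_le)
      ultimately show ?thesis by simp
    qed
    moreover have "\<delta> \<le> \<tau> * r / 2" unfolding tt using d by (simp add: mult.commute)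
    moreover have "\<eta> * \<mu> \<le> 1"
    proof -
      have "r * q \<le> q" using r0 q0 by (simp add: mult_le_cancel_right1)
      then show ?thesis unfolding e using False by simp
    qed
    ultimately show ?thesis by simp
  qed
  then show "\<delta> \<le> \<eta> * \<mu>" "2 * \<delta> * (1 - \<tau>) \<le> \<tau>" "\<delta> \<le> \<tau> * r / 2" "\<eta> * \<mu> \<le> 1"
    by simp_all
qed



lemma norm3_bound:
  fixes u v w :: "'a::real_inner"
  shows "(u + v + w) \<bullet> (u + v + w) \<le> 2 * (u \<bullet> u) + 4 * (v \<bullet> v) + 4 * (w \<bullet> w)"
proof -
  have par: "(a + b) \<bullet> (a + b) \<le> 2 * (a \<bullet> a) + 2 * (b \<bullet> b)" for a b :: 'a
  proof -
    have "0 \<le> (a - b) \<bullet> (a - b)" by simp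
    then show ?thesis by (simp add: inner_add_left inner_add_right inner_diff_left inner_diff_right inner_commute)
  qed
  have "(u + v + w) \<bullet> (u + v + w) \<le> 2 * (u \<bullet> u) + 2 * ((v + w) \<bullet> (v + w))"
    using par[of u "v + w"] by (simp add: add.assoc)
  also have "\<dots> \<le> 2 * (u \<bullet> u) + 2 * (2 * (v \<bullet> v) + 2 * (w \<bullet> w))"
    using par[of v w] by simp
  finally show ?thesis by simp
qed

context symop
begin

lemma lmax_nonneg: "0 \<le> lambda_max W"
proof -
  obtain v where v: "v \<noteq> 0" "W v = lambda_max W *\<^sub>R v"
    using lmax(1) unfolding eigenvalues_of_def by blast
  have "0 \<le> W v \<bullet> v" by (rule psd)
  then have "0 \<le> lambda_max W * (v \<bullet> v)" using v by simp
  moreover have "0 < v \<bullet> v" using v by simp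
  ultimately show ?thesis by (simp add: zero_le_mult_iff)
qed

lemma pinv_lower:
  assumes u: "u \<in> range W"
  shows "(u \<bullet> u) \<le> lambda_max W * (pinv W u \<bullet> u)"
proof -
  define z where "z = pinv W u"
  have z: "z \<in> range W" "W z = u" using pinv[OF u] z_def by auto
  define A where "A = W z \<bullet> z"
  define B where "B = W z \<bullet> W z"
  define C where "C = W (W z) \<bullet> W z"
  have q: "0 \<le> A + 2 * t * B + t\<^sup>2 * C" for t
  proof -
    have "0 \<le> W (z + t *\<^sub>R W z) \<bullet> (z + t *\<^sub>R W z)" by (rule psd)
    also have "\<dots> = A + 2 * t * B + t\<^sup>2 * C"
      unfolding A_def B_def C_def
      by (simp add: Wadd Wscale inner_add_left inner_add_right sym[of "W z" z] inner_commute[of z "W z"]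
          algebra_simps power2_eq_square)
    finally show ?thesis .
  qed
  have C0: "0 \<le> C" unfolding C_def by (rule psd)
  have cs: "B\<^sup>2 \<le> A * C" by (rule quad_cs[OF q C0])
  have Cb: "C \<le> lambda_max W * B" unfolding C_def B_def by (rule lmax(2))
  have A0: "0 \<le> A" unfolding A_def by (rule psd)
  have B0: "0 \<le> B" unfolding B_def by simp
  have "B\<^sup>2 \<le> A * (lambda_max W * B)" using cs mult_left_mono[OF Cb A0] by linarith
  then have "B * B \<le> (lambda_max W * A) * B" by (simp add: power2_eq_square algebra_simps)
  then have "B \<le> lambda_max W * A" using B0
    by (cases "B = 0") (auto intro: mult_nonneg_nonneg[OF lmax_nonneg A0] elim!: mult_right_le_imp_le)
  moreover have "B = u \<bullet> u" unfolding B_def using z by simp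
  moreover have "A = pinv W u \<bullet> u" unfolding A_def z_def using z z_def by (simp add: inner_commute)
  ultimately show ?thesis by simp
qed

lemma pinv_upper:
  assumes nz: "\<exists>u. W u \<noteq> 0" and u: "u \<in> range W"
  shows "lambda_min_pos W * (pinv W u \<bullet> u) \<le> u \<bullet> u"
proof -
  define z where "z = pinv W u"
  have z: "z \<in> range W" "W z = u" using pinv[OF u] z_def by auto
  define A where "A = W z \<bullet> z"
  define B where "B = W z \<bullet> W z"
  have A0: "0 \<le> A" unfolding A_def by (rule psd)
  have cs: "A\<^sup>2 \<le> B * (z \<bullet> z)"
  proof -
    have "\<bar>W z \<bullet> z\<bar> \<le> norm (W z) * norm z" by (rule Cauchy_Schwarz_ineq2)
    then have "A\<^sup>2 \<le> (norm (W z) * norm z)\<^sup>2" unfolding A_def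
      by (metis abs_ge_zero power2_abs power_mono)
    also have "\<dots> = B * (z \<bullet> z)" unfolding B_def by (simp add: power_mult_distrib dot_square_norm)
    finally show ?thesis .
  qed
  have zz: "lambda_min_pos W * (z \<bullet> z) \<le> A" unfolding A_def by (rule lmin(2)[OF nz z(1)])
  have lp: "0 < lambda_min_pos W" by (rule lmin(1)[OF nz])
  have "lambda_min_pos W * A\<^sup>2 \<le> B * (lambda_min_pos W * (z \<bullet> z))"
    using mult_left_mono[OF cs, of "lambda_min_pos W"] lp by (simp add: algebra_simps)
  also have "\<dots> \<le> B * A" using mult_left_mono[OF zz, of B] unfolding B_def by simp
  finally have "lambda_min_pos W * A * A \<le> B * A" by (simp add: power2_eq_square algebra_simps)
  then have "lambda_min_pos W * A \<le> B"
    using A0 by (cases "A = 0") (auto simp: B_def elim!: mult_right_le_imp_le)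
  moreover have "B = u \<bullet> u" unfolding B_def using z by simp
  moreover have "A = pinv W u \<bullet> u" unfolding A_def z_def using z z_def by (simp add: inner_commute)
  ultimately show ?thesis by simp
qed

end



lemma step:
  fixes F :: "'a::euclidean_space \<Rightarrow> real" and gF W :: "'a \<Rightarrow> 'a"
    and \<mu> L \<eta> \<theta> \<tau> \<delta> :: real and xs x xf y xg xh y1 x1 xf1 :: 'a
  assumes grad: "is_gradient F gF" and sm: "L_smooth L gF" and sc: "strongly_convex \<mu> F"
    and mu: "0 < \<mu>" "\<mu> \<le> L"
    and so: "symop W" and nz: "\<exists>u. W u \<noteq> 0"
    and Wxs: "W xs = 0" and ysr: "- gF xs \<in> range W" and yr: "y \<in> range W"
    and tau: "\<tau> = min 1 (1/2 * sqrt (\<mu> / L * (lambda_max W / lambda_min_pos W)))"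
    and eta: "\<eta> = 1 / (4 * \<tau> * L)" and theta: "\<theta> = 1 / (\<eta> * lambda_max W)"
    and delta: "\<delta> = 1/4 * min (sqrt (\<mu> / L * (lambda_min_pos W / lambda_max W))) (lambda_min_pos W / lambda_max W)"
    and xgd: "xg = \<tau> *\<^sub>R x + (1 - \<tau>) *\<^sub>R xf"
    and xhd: "xh = inverse (1 + \<eta> * \<mu>) *\<^sub>R (x - \<eta> *\<^sub>R (gF xg - \<mu> *\<^sub>R xg + y))"
    and y1d: "y1 = y + \<theta> *\<^sub>R W xh"
    and x1d: "x1 = inverse (1 + \<eta> * \<mu>) *\<^sub>R (x - \<eta> *\<^sub>R (gF xg - \<mu> *\<^sub>R xg + y1))"
    and xf1d: "xf1 = xg + (2 * \<tau> / (2 - \<tau>)) *\<^sub>R (x1 - x)"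
  shows "(\<lambda>x y xf. 1 / \<eta> * (norm (x - xs))\<^sup>2
            + ((1 / \<theta>) *\<^sub>R pinv W (y - - gF xs) - (inverse (1 + \<eta> * \<mu>) * \<eta>) *\<^sub>R (y - - gF xs)) \<bullet> (y - - gF xs)
            + 2 * (1 - \<tau>) / \<tau> * bregman F gF xf xs) x1 y1 xf1
       \<le> inverse (1 + \<delta>) * (\<lambda>x y xf. 1 / \<eta> * (norm (x - xs))\<^sup>2
            + ((1 / \<theta>) *\<^sub>R pinv W (y - - gF xs) - (inverse (1 + \<eta> * \<mu>) * \<eta>) *\<^sub>R (y - - gF xs)) \<bullet> (y - - gF xs)
            + 2 * (1 - \<tau>) / \<tau> * bregman F gF xf xs) x y xf"
proof -
  interpret symop W by (rule so)
  define lm where "lm = lambda_max W"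
  define lp where "lp = lambda_min_pos W"
  define r where "r = lp / lm"
  have lp0: "0 < lp" unfolding lp_def by (rule lmin(1)[OF nz])
  have lplm: "lp \<le> lm" unfolding lp_def lm_def by (rule lmin(3)[OF nz])
  have lm0: "0 < lm" using lp0 lplm by simp
  have L0: "0 < L" using mu by simp
  note pr = params[OF mu lp0 lplm tau[folded lm_def lp_def] eta delta[folded lm_def lp_def] r_def]
  have t0: "0 < \<tau>" and t1: "\<tau> \<le> 1" and dem: "\<delta> \<le> \<eta> * \<mu>" and d2: "2 * \<delta> * (1 - \<tau>) \<le> \<tau>"
    and dr4: "\<delta> \<le> r / 4" and dtr: "\<delta> \<le> \<tau> * r / 2" and em1: "\<eta> * \<mu> \<le> 1" and d0: "0 \<le> \<delta>"
    and r0: "0 < r" and r1: "r \<le> 1" and e0: "0 < \<eta>" using pr by auto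
  have th0: "0 < \<theta>" unfolding theta using e0 lm0 lm_def by simp
  have ith: "1 / \<theta> = \<eta> * lm" unfolding theta lm_def by simp
  define a where "a = 1 + \<eta> * \<mu>"
  have a1: "1 < a" unfolding a_def using e0 mu by simp
  define ys where "ys = - gF xs"
  define G where "G = gF xg - gF xs"
  define e where "e = xg - xs"
  define dx where "dx = x - xs"
  define dx1 where "dx1 = x1 - xs"
  define Dx where "Dx = x1 - x"
  define dy where "dy = y - ys"
  define dy1 where "dy1 = y1 - ys"
  define Dy where "Dy = y1 - y"
  define N where "N u = ((1 / \<theta>) *\<^sub>R pinv W u - (inverse a * \<eta>) *\<^sub>R u) \<bullet> u" for u
  define K where "K = gF xg - \<mu> *\<^sub>R xg + y1"
  have sr: "subspace (range W)" by (rule subspace_range)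
  have Dyv: "Dy = \<theta> *\<^sub>R W xh" unfolding Dy_def y1d by simp
  have Dyr: "Dy \<in> range W" unfolding Dyv Wscale[symmetric] by (rule rangeI)
  have dyr: "dy \<in> range W" unfolding dy_def ys_def by (rule subspace_diff[OF sr yr ysr])
  have dy1r: "dy1 \<in> range W"
  proof -
    have "dy1 = dy + Dy" unfolding dy1_def dy_def Dy_def by simp
    then show ?thesis using dyr Dyr sr by (simp add: subspace_add)
  qed
  have ax1: "a *\<^sub>R x1 = x - \<eta> *\<^sub>R K" unfolding x1d K_def a_def using a1 a_def by simp
  have xx: "x = a *\<^sub>R x1 + \<eta> *\<^sub>R K" using ax1 by simp
  have V1: "Dx = - \<eta> *\<^sub>R (G + \<mu> *\<^sub>R (x1 - xg) + dy1)"
  proof -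
    have "Dx = x1 - (a *\<^sub>R x1 + \<eta> *\<^sub>R K)" unfolding Dx_def using xx by simp
    then show ?thesis unfolding a_def K_def G_def dy1_def ys_def by (simp add: algebra_simps)
  qed
  have V2: "x1 - xh = - (inverse a * \<eta>) *\<^sub>R Dy"
    unfolding x1d xhd Dy_def a_def[symmetric] by (simp add: algebra_simps)
  have V4: "\<tau> *\<^sub>R dx = e - (1 - \<tau>) *\<^sub>R (xf - xs)"
    unfolding dx_def e_def xgd by (simp add: algebra_simps)
  have V5: "Dx = ((2 - \<tau>) / (2 * \<tau>)) *\<^sub>R (xf1 - xg)"
  proof -
    have "xf1 - xg = (2 * \<tau> / (2 - \<tau>)) *\<^sub>R Dx" unfolding xf1d Dx_def by simp
    then show ?thesis using t0 t1 by simp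
  qed
  define I0 where "I0 = dx \<bullet> dx"
  define I1 where "I1 = dx1 \<bullet> dx1"
  define P where "P = Dx \<bullet> Dx"
  define Q where "Q = (x1 - xg) \<bullet> (x1 - xg)"
  define E where "E = e \<bullet> e"
  define GG where "GG = G \<bullet> G"
  have eA: "I1 = I0 + 2 * (Dx \<bullet> dx1) - P"
  proof -
    have "dx = dx1 - Dx" unfolding dx_def dx1_def Dx_def by simp
    then show ?thesis unfolding I0_def I1_def P_def
      by (simp add: inner_diff_left inner_diff_right inner_commute)
  qed
  have eB: "2 * (Dx \<bullet> dx1) = - 2 * \<eta> * (G \<bullet> dx1) - \<eta> * \<mu> * (2 * ((x1 - xg) \<bullet> dx1)) - \<eta> * (2 * (dy1 \<bullet> dx1))"
    unfolding V1 by (simp add: inner_add_left algebra_simps)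
  have eB2: "2 * ((x1 - xg) \<bullet> dx1) = Q + I1 - E"
  proof -
    have "x1 - xg = dx1 - e" unfolding dx1_def e_def by simp
    then show ?thesis unfolding Q_def I1_def E_def
      by (simp add: inner_diff_left inner_diff_right inner_commute)
  qed
  define p1 where "p1 = pinv W dy1"
  define p0 where "p0 = pinv W dy"
  have p1: "p1 \<in> range W" "W p1 = dy1" using pinv[OF dy1r] p1_def by auto
  have p0: "p0 \<in> range W" "W p0 = dy" using pinv[OF dyr] p0_def by auto
  have pD: "pinv W Dy = p1 - p0"
  proof -
    have "Dy = dy1 - dy" unfolding Dy_def dy1_def dy_def by simp
    then show ?thesis unfolding p1_def p0_def using pinv_diff[OF dy1r dyr] by simp
  qed
  have c2: "dy1 \<bullet> (xh - xs) = (1 / \<theta>) * (p1 \<bullet> Dy)"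
  proof -
    have "dy1 \<bullet> (xh - xs) = W p1 \<bullet> (xh - xs)" using p1 by simp
    also have "\<dots> = p1 \<bullet> W (xh - xs)" by (rule sym)
    also have "\<dots> = p1 \<bullet> W xh" using Wxs by (simp add: Wdiff)
    also have "W xh = (1 / \<theta>) *\<^sub>R Dy" unfolding Dyv using th0 by simp
    finally show ?thesis by simp
  qed
  have p10: "p0 \<bullet> dy1 = p1 \<bullet> dy"
    unfolding p0_def p1_def using pinv_sym[OF dyr dy1r] by (simp add: inner_commute)
  have c3: "2 * (p1 \<bullet> Dy) = p1 \<bullet> dy1 + pinv W Dy \<bullet> Dy - p0 \<bullet> dy"
  proof -
    have Dyd: "Dy = dy1 - dy" unfolding Dy_def dy1_def dy_def by simp
    show ?thesis unfolding pD unfolding Dyd using p10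
      by (simp add: inner_diff_left inner_diff_right algebra_simps)
  qed
  have c4: "2 * (dy1 \<bullet> Dy) = dy1 \<bullet> dy1 + Dy \<bullet> Dy - dy \<bullet> dy"
  proof -
    have "Dy = dy1 - dy" unfolding Dy_def dy1_def dy_def by simp
    then show ?thesis by (simp add: inner_diff_left inner_diff_right inner_commute)
  qed
  have Nform: "N u = (1 / \<theta>) * (pinv W u \<bullet> u) - (inverse a * \<eta>) * (u \<bullet> u)" for u
    unfolding N_def by (simp add: inner_diff_left)
  have eC: "2 * (dy1 \<bullet> dx1) = N dy1 + N Dy - N dy"
  proof -
    have "dx1 = (xh - xs) - (inverse a * \<eta>) *\<^sub>R Dy" using V2 unfolding dx1_def by (simp add: algebra_simps)
    then have "2 * (dy1 \<bullet> dx1) = 2 * (dy1 \<bullet> (xh - xs)) - (inverse a * \<eta>) * (2 * (dy1 \<bullet> Dy))"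
      by (simp add: inner_diff_right)
    also have "\<dots> = (1 / \<theta>) * (2 * (p1 \<bullet> Dy)) - (inverse a * \<eta>) * (2 * (dy1 \<bullet> Dy))"
      unfolding c2 by simp
    also have "\<dots> = N dy1 + N Dy - N dy"
      unfolding c3 c4 unfolding Nform p1_def p0_def by (simp add: algebra_simps)
    finally show ?thesis .
  qed
  have eB': "2 * (Dx \<bullet> dx1) = - 2 * \<eta> * (G \<bullet> dx1) - \<eta> * \<mu> * Q - \<eta> * \<mu> * I1 + \<eta> * \<mu> * E
      - \<eta> * N dy1 - \<eta> * N Dy + \<eta> * N dy"
    using eB unfolding eB2 eC by (simp add: algebra_simps)
  have Step1: "I1 + \<eta> * \<mu> * I1 + \<eta> * N dy1 = I0 + \<eta> * N dy - \<eta> * N Dy - P - \<eta> * \<mu> * Q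
      + \<eta> * \<mu> * E - 2 * \<eta> * (G \<bullet> dx1)"
    using eA eB' by linarith
  define Df where "Df = bregman F gF xf xs"
  define Df1 where "Df1 = bregman F gF xf1 xs"
  define Dg where "Dg = bregman F gF xg xs"
  define Ds where "Ds = bregman F gF xs xg"
  define Dfg where "Dfg = bregman F gF xf xg"
  define Dfg1 where "Dfg1 = bregman F gF xf1 xg"
  define S1 where "S1 = (xf1 - xg) \<bullet> (xf1 - xg)"
  define k where "k = (2 - \<tau>) / \<tau>"
  define c where "c = 2 * (1 - \<tau>) / \<tau>"
  define s where "s = 2 * \<tau> * L / (2 - \<tau>)"
  have g1: "G \<bullet> dx1 = G \<bullet> Dx + G \<bullet> dx"
  proof -
    have "dx1 = Dx + dx" unfolding dx1_def Dx_def dx_def by simp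
    then show ?thesis by (simp add: inner_add_right)
  qed
  have g2: "G \<bullet> dx = (G \<bullet> e - (1 - \<tau>) * (G \<bullet> (xf - xs))) / \<tau>"
  proof -
    have "\<tau> * (G \<bullet> dx) = G \<bullet> (\<tau> *\<^sub>R dx)" by simp
    also have "\<dots> = G \<bullet> e - (1 - \<tau>) * (G \<bullet> (xf - xs))" unfolding V4 by (simp add: inner_diff_right)
    finally show ?thesis using t0 by (simp add: field_simps)
  qed
  have g3: "G \<bullet> (xf - xs) = G \<bullet> (xf - xg) + G \<bullet> e"
    unfolding e_def by (simp add: inner_diff_right)
  have g4: "G \<bullet> (xf - xg) = Df - Dfg - Dg"
    unfolding Df_def Dfg_def Dg_def G_def bregman_def by (simp add: inner_diff_left inner_diff_right)
  have g5: "G \<bullet> e = Dg + Ds"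
    unfolding Dg_def Ds_def G_def e_def bregman_def by (simp add: inner_diff_left inner_diff_right inner_commute)
  have g6: "G \<bullet> (xf1 - xg) = Df1 - Dfg1 - Dg"
    unfolding Df1_def Dfg1_def Dg_def G_def bregman_def by (simp add: inner_diff_left inner_diff_right)
  have g7: "G \<bullet> Dx = ((2 - \<tau>) / (2 * \<tau>)) * (G \<bullet> (xf1 - xg))"
    unfolding V5 by simp
  have g8: "S1 = (2 * \<tau> / (2 - \<tau>))\<^sup>2 * P"
  proof -
    have "xf1 - xg = (2 * \<tau> / (2 - \<tau>)) *\<^sub>R Dx" unfolding xf1d Dx_def by simp
    then show ?thesis unfolding S1_def P_def by (simp add: power2_eq_square)
  qed
  have T: "- 2 * (G \<bullet> dx1) + \<mu> * E = - k * Df1 + k * Dfg1 - Dg - 2 * Ds + c * Df - c * Dfg + \<mu> * E"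
  proof -
    have "- 2 * (G \<bullet> dx1) = - 2 * (((2 - \<tau>) / (2 * \<tau>)) * (Df1 - Dfg1 - Dg)
       + ((Dg + Ds) - (1 - \<tau>) * ((Df - Dfg - Dg) + (Dg + Ds))) / \<tau>)"
      unfolding g1 g7 g6 g2 g3 g4 g5 by simp
    also have "\<dots> = - k * Df1 + k * Dfg1 - Dg - 2 * Ds + c * Df - c * Dfg"
      unfolding k_def c_def using t0 t1 by (simp add: field_simps)
    finally show ?thesis by simp
  qed
  have k0: "0 \<le> k" unfolding k_def using t0 t1 by simp
  have c0: "0 \<le> c" unfolding c_def using t0 t1 by simp
  have bFg1: "Dfg1 \<le> L / 2 * S1"
    unfolding Dfg1_def bregman_def S1_def using smooth_ub[OF grad sm, of xf1 xg] by (simp add: dot_square_norm)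
  have bDg: "\<mu> * E \<le> 2 * Dg"
    unfolding Dg_def E_def e_def using sconv_lb[OF grad sc, of xg xs] by (simp add: dot_square_norm)
  have bDs: "\<mu> * E \<le> 2 * Ds"
  proof -
    have "\<mu> / 2 * (norm (xs - xg))\<^sup>2 \<le> Ds" unfolding Ds_def by (rule sconv_lb[OF grad sc])
    moreover have "(norm (xs - xg))\<^sup>2 = E" unfolding E_def e_def
      by (simp add: dot_square_norm[symmetric] norm_minus_commute)
    ultimately show ?thesis by simp
  qed
  have cvx: "0 \<le> bregman F gF u v" for u v
  proof -
    have "\<mu> / 2 * (norm (u - v))\<^sup>2 \<le> bregman F gF u v" by (rule sconv_lb[OF grad sc])
    moreover have "0 \<le> \<mu> / 2 * (norm (u - v))\<^sup>2" using mu by simp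
    ultimately show ?thesis by linarith
  qed
  have bGs: "GG / (2 * L) \<le> Ds"
    unfolding GG_def Ds_def G_def using cocoercive[OF grad sm L0 cvx, of xs xg]
    by (simp add: dot_square_norm norm_minus_commute)
  have bDf1: "0 \<le> Df1" unfolding Df1_def by (rule cvx)
  have bFg: "0 \<le> Dfg" unfolding Dfg_def by (rule cvx)
  have nz2: "2 - \<tau> \<noteq> 0" using t1 by simp
  have f1: "((2 - \<tau>) / \<tau>) * ((2 * \<tau>) / (2 - \<tau>)) = 2" using t0 nz2 by (simp add: field_simps)
  have kS: "k * (L / 2 * S1) = s * P"
  proof -
    have "k * (L / 2 * S1) = (((2 - \<tau>) / \<tau>) * ((2 * \<tau>) / (2 - \<tau>))) * (L / 2) * ((2 * \<tau>) / (2 - \<tau>)) * P"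
      unfolding g8 k_def by (simp only: power2_eq_square mult_ac)
    also have "\<dots> = s * P" unfolding f1 s_def by simp
    finally show ?thesis .
  qed
  have kb: "k * Dfg1 \<le> s * P" using mult_left_mono[OF bFg1 k0] kS by simp
  have cb: "0 \<le> c * Dfg" using c0 bFg by simp
  have Step2: "- 2 * (G \<bullet> dx1) + \<mu> * E \<le> - k * Df1 + c * Df + s * P - GG / (2 * L)"
    using T kb cb bDg bDs bGs by linarith
  have Step2e: "- (2 * \<eta> * (G \<bullet> dx1)) + \<eta> * \<mu> * E \<le> - (\<eta> * (k * Df1)) + \<eta> * (c * Df) + \<eta> * (s * P) - \<eta> * (GG / (2 * L))"
  proof -
    have "\<eta> * (- 2 * (G \<bullet> dx1) + \<mu> * E) \<le> \<eta> * (- k * Df1 + c * Df + s * P - GG / (2 * L))"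
      by (rule mult_left_mono[OF Step2]) (use e0 in simp)
    then show ?thesis by (simp add: algebra_simps)
  qed
  have KEY: "I1 + \<eta> * \<mu> * I1 + \<eta> * N dy1 + \<eta> * (k * Df1) \<le> I0 + \<eta> * N dy - \<eta> * N Dy - P - \<eta> * \<mu> * Q
      + \<eta> * (c * Df) + \<eta> * (s * P) - \<eta> * (GG / (2 * L))"
    using Step1 Step2e by linarith
  have ia: "inverse a \<le> 1" using a1 by (simp add: inverse_le_1_iff)
  have ia0: "0 \<le> inverse a" using a1 by simp
  have ND: "0 \<le> \<eta> * N Dy"
  proof -
    have mD: "Dy \<bullet> Dy \<le> lm * (pinv W Dy \<bullet> Dy)" unfolding lm_def by (rule pinv_lower[OF Dyr])
    have "inverse a * \<eta> * (Dy \<bullet> Dy) \<le> 1 * \<eta> * (Dy \<bullet> Dy)"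
      by (intro mult_right_mono ia) (use e0 in simp_all)
    also have "\<dots> \<le> \<eta> * (lm * (pinv W Dy \<bullet> Dy))" using mult_left_mono[OF mD, of \<eta>] e0 by simp
    also have "\<dots> = (1 / \<theta>) * (pinv W Dy \<bullet> Dy)" unfolding ith by simp
    finally have "0 \<le> N Dy" unfolding Nform by simp
    then show ?thesis using e0 by simp
  qed
  have N1b: "N dy1 \<le> (\<eta> / r) * (dy1 \<bullet> dy1)"
  proof -
    have m11: "lp * (pinv W dy1 \<bullet> dy1) \<le> dy1 \<bullet> dy1" unfolding lp_def by (rule pinv_upper[OF nz dy1r])
    have "0 \<le> (inverse a * \<eta>) * (dy1 \<bullet> dy1)" using ia0 e0 by simp
    then have "N dy1 \<le> (1 / \<theta>) * (pinv W dy1 \<bullet> dy1)" unfolding Nform by simp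
    also have "\<dots> = (\<eta> * lm / lp) * (lp * (pinv W dy1 \<bullet> dy1))" unfolding ith using lp0 by simp
    also have "\<dots> \<le> (\<eta> * lm / lp) * (dy1 \<bullet> dy1)" by (rule mult_left_mono[OF m11]) (use e0 lm0 lp0 in simp)
    also have "\<eta> * lm / lp = \<eta> / r" unfolding r_def using lm0 lp0 by simp
    finally show ?thesis .
  qed
  have dyv: "dy1 = (- (1 / \<eta>)) *\<^sub>R Dx + (- G) + (- \<mu>) *\<^sub>R (x1 - xg)"
    unfolding V1 using e0 by (simp add: algebra_simps)
  have Y1b: "dy1 \<bullet> dy1 \<le> 2 * ((1 / \<eta>)\<^sup>2 * P) + 4 * GG + 4 * (\<mu>\<^sup>2 * Q)"
  proof -
    have "dy1 \<bullet> dy1 \<le> 2 * (((- (1 / \<eta>)) *\<^sub>R Dx) \<bullet> ((- (1 / \<eta>)) *\<^sub>R Dx)) + 4 * ((- G) \<bullet> (- G))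
        + 4 * (((- \<mu>) *\<^sub>R (x1 - xg)) \<bullet> ((- \<mu>) *\<^sub>R (x1 - xg)))"
      unfolding dyv by (rule norm3_bound)
    then show ?thesis unfolding P_def GG_def Q_def by (simp add: power2_eq_square)
  qed
  define w where "w = \<delta> * \<eta> * (\<eta> / r)"
  have w0: "0 \<le> w" unfolding w_def using d0 e0 r0 by simp
  have cw1: "w * (2 * (1 / \<eta>)\<^sup>2) \<le> 1 / 2"
  proof -
    have "w * (2 * (1 / \<eta>)\<^sup>2) = 2 * \<delta> / r" unfolding w_def using e0 by (simp add: power2_eq_square field_simps)
    also have "\<dots> \<le> 1 / 2" using dr4 r0 by (simp add: field_simps)
    finally show ?thesis .
  qed
  have cw2: "4 * w \<le> \<eta> / (2 * L)"
  proof -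
    have eL: "\<eta> * L = 1 / (4 * \<tau>)" unfolding eta using L0 t0 by simp
    have "4 * w = \<eta> * (4 * \<delta> * (\<eta> * L) / (r * L))" unfolding w_def using L0 by (simp add: field_simps)
    also have "\<dots> = \<eta> * (\<delta> / (\<tau> * r * L))" unfolding eL using t0 r0 L0 by (simp add: field_simps)
    also have "\<dots> \<le> \<eta> * (1 / (2 * L))"
    proof (rule mult_left_mono)
      show "\<delta> / (\<tau> * r * L) \<le> 1 / (2 * L)" using dtr t0 r0 L0 by (simp add: field_simps)
    qed (use e0 in simp)
    finally show ?thesis by simp
  qed
  have cw3: "4 * w * \<mu>\<^sup>2 \<le> \<eta> * \<mu>"
  proof -
    have "4 * w * \<mu>\<^sup>2 = (\<eta> * \<mu>) * (4 * \<delta> * (\<eta> * \<mu>) / r)" unfolding w_def using r0 by (simp add: power2_eq_square field_simps)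
    also have "\<dots> \<le> (\<eta> * \<mu>) * 1"
    proof (rule mult_left_mono)
      have "4 * \<delta> * (\<eta> * \<mu>) \<le> 4 * \<delta> * 1" by (rule mult_left_mono[OF em1]) (use d0 in simp)
      then show "4 * \<delta> * (\<eta> * \<mu>) / r \<le> 1" using dr4 r0 by (simp add: field_simps)
    qed (use e0 mu in simp)
    finally show ?thesis by simp
  qed
  have P0: "0 \<le> P" unfolding P_def by simp
  have Q0: "0 \<le> Q" unfolding Q_def by simp
  have GG0: "0 \<le> GG" unfolding GG_def by simp
  have I10: "0 \<le> I1" unfolding I1_def by simp
  have F4: "\<delta> * (\<eta> * N dy1) \<le> P / 2 + \<eta> * (GG / (2 * L)) + \<eta> * \<mu> * Q"
  proof -
    have "\<delta> * (\<eta> * N dy1) \<le> \<delta> * (\<eta> * ((\<eta> / r) * (dy1 \<bullet> dy1)))"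
      by (intro mult_left_mono N1b) (use d0 e0 in simp_all)
    also have "\<dots> = w * (dy1 \<bullet> dy1)" unfolding w_def by simp
    also have "\<dots> \<le> w * (2 * ((1 / \<eta>)\<^sup>2 * P) + 4 * GG + 4 * (\<mu>\<^sup>2 * Q))" by (rule mult_left_mono[OF Y1b w0])
    also have "\<dots> = (w * (2 * (1 / \<eta>)\<^sup>2)) * P + (4 * w) * GG + (4 * w * \<mu>\<^sup>2) * Q" by (simp add: algebra_simps)
    also have "\<dots> \<le> (1 / 2) * P + (\<eta> / (2 * L)) * GG + (\<eta> * \<mu>) * Q"
      by (intro add_mono mult_right_mono cw1 cw2 cw3 P0 GG0 Q0)
    finally show ?thesis by simp
  qed
  have F2: "\<delta> * I1 \<le> \<eta> * \<mu> * I1" by (rule mult_right_mono[OF dem I10])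
  have F3: "\<eta> * (c * Df1) + \<delta> * (\<eta> * (c * Df1)) \<le> \<eta> * (k * Df1)"
  proof -
    have "(1 + \<delta>) * (2 * (1 - \<tau>)) \<le> 2 - \<tau>" using d2 by (simp add: algebra_simps)
    then have "((1 + \<delta>) * (2 * (1 - \<tau>))) / \<tau> \<le> (2 - \<tau>) / \<tau>" by (rule divide_right_mono) (use t0 in simp)
    then have "(1 + \<delta>) * c \<le> k" unfolding c_def k_def by simp
    then have "((1 + \<delta>) * c) * (\<eta> * Df1) \<le> k * (\<eta> * Df1)" by (rule mult_right_mono) (use e0 bDf1 in simp)
    then show ?thesis by (simp add: algebra_simps)
  qed
  have es: "\<eta> * (s * P) \<le> P / 2"
  proof -
    have "\<eta> * s = 1 / (2 * (2 - \<tau>))" unfolding eta s_def using t0 L0 nz2 by (simp add: field_simps)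
    also have "\<dots> \<le> 1 / 2" using t0 t1 by (simp add: field_simps)
    finally have "(\<eta> * s) * P \<le> (1 / 2) * P" by (rule mult_right_mono) (rule P0)
    then show ?thesis by simp
  qed
  have G0: "(1 + \<delta>) * (I1 + \<eta> * N dy1 + \<eta> * (c * Df1)) \<le> I0 + \<eta> * N dy + \<eta> * (c * Df)"
  proof -
    have "(1 + \<delta>) * (I1 + \<eta> * N dy1 + \<eta> * (c * Df1))
        = I1 + \<eta> * N dy1 + \<eta> * (c * Df1) + \<delta> * I1 + \<delta> * (\<eta> * N dy1) + \<delta> * (\<eta> * (c * Df1))"
      by (simp add: algebra_simps)
    then show ?thesis using KEY F2 F3 F4 ND es by linarith
  qed
  define X1 where "X1 = 1 / \<eta> * I1 + N dy1 + c * Df1"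
  define X0 where "X0 = 1 / \<eta> * I0 + N dy + c * Df"
  have hX1: "\<eta> * X1 = I1 + \<eta> * N dy1 + \<eta> * (c * Df1)" unfolding X1_def using e0 by (simp add: algebra_simps)
  have hX0: "\<eta> * X0 = I0 + \<eta> * N dy + \<eta> * (c * Df)" unfolding X0_def using e0 by (simp add: algebra_simps)
  have "\<eta> * ((1 + \<delta>) * X1) \<le> \<eta> * X0"
  proof -
    have "\<eta> * ((1 + \<delta>) * X1) = (1 + \<delta>) * (\<eta> * X1)" by (simp add: algebra_simps)
    also have "\<dots> = (1 + \<delta>) * (I1 + \<eta> * N dy1 + \<eta> * (c * Df1))" unfolding hX1 ..
    also have "\<dots> \<le> I0 + \<eta> * N dy + \<eta> * (c * Df)" by (rule G0)
    also have "\<dots> = \<eta> * X0" unfolding hX0 ..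
    finally show ?thesis .
  qed
  then have m: "(1 + \<delta>) * X1 \<le> X0" using e0 by simp
  have fin: "X1 \<le> inverse (1 + \<delta>) * X0"
  proof -
    have "X1 = inverse (1 + \<delta>) * ((1 + \<delta>) * X1)" using d0 by simp
    also have "\<dots> \<le> inverse (1 + \<delta>) * X0" by (rule mult_left_mono[OF m]) (use d0 in simp)
    finally show ?thesis .
  qed
  have ys_eq: "y1 - - gF xs = dy1" "y - - gF xs = dy" unfolding dy1_def dy_def ys_def by simp_all
  have Xform: "1 / \<eta> * (norm (u - xs))\<^sup>2 + ((1 / \<theta>) *\<^sub>R pinv W v - (inverse (1 + \<eta> * \<mu>) * \<eta>) *\<^sub>R v) \<bullet> v
      + 2 * (1 - \<tau>) / \<tau> * bregman F gF w xs = 1 / \<eta> * ((u - xs) \<bullet> (u - xs)) + N v + c * bregman F gF w xs" for u v w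
    unfolding N_def a_def c_def by (simp add: dot_square_norm)
  show ?thesis using fin unfolding ys_eq Xform X1_def X0_def I0_def I1_def dx_def dx1_def Df_def Df1_def .
qed



theorem mainTheorem8:
  fixes F :: "real^'d^'n \<Rightarrow> real" and gF :: "real^'d^'n \<Rightarrow> real^'d^'n"
    and W :: "real^'d^'n \<Rightarrow> real^'d^'n"
    and \<mu> L \<eta> \<theta> \<alpha> \<tau> :: real
    and xstar :: "real^'d^'n"
    and x xf xg xh y :: "nat \<Rightarrow> real^'d^'n"
    and k :: nat
  assumes n2: "CARD('n) \<ge> 2"
    and grad: "is_gradient F gF"
    and mu_pos: "0 < \<mu>" and mu_le_L: "\<mu> \<le> L"
    and sconv: "strongly_convex \<mu> F"
    and smooth: "L_smooth L gF"
    and W_lin: "linear W"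
    and W_sym: "\<forall>u v. W u \<bullet> v = u \<bullet> W v"
    and W_psd: "\<forall>u. 0 \<le> W u \<bullet> u"
    and W_ker: "{u. W u = 0} = consensus"
    and xstar_mem: "xstar \<in> consensus"
    and xstar_min: "\<forall>u\<in>consensus. F xstar \<le> F u"
    and tau_def: "\<tau> = min 1 (1/2 * sqrt (\<mu> / L * (lambda_max W / lambda_min_pos W)))"
    and eta_def: "\<eta> = 1 / (4 * \<tau> * L)"
    and theta_def: "\<theta> = 1 / (\<eta> * lambda_max W)"
    and alpha_def: "\<alpha> = \<mu>"
    and y0: "y 0 \<in> range W"
    and xf0: "xf 0 = x 0"
    and xg_def: "\<forall>j. xg j = \<tau> *\<^sub>R x j + (1 - \<tau>) *\<^sub>R xf j"
    and xh_def: "\<forall>j. xh j = inverse (1 + \<eta> * \<alpha>) *\<^sub>R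
                   (x j - \<eta> *\<^sub>R (gF (xg j) - \<alpha> *\<^sub>R xg j + y j))"
    and y_def: "\<forall>j. y (Suc j) = y j + \<theta> *\<^sub>R W (xh j)"
    and x_def: "\<forall>j. x (Suc j) = inverse (1 + \<eta> * \<alpha>) *\<^sub>R
                   (x j - \<eta> *\<^sub>R (gF (xg j) - \<alpha> *\<^sub>R xg j + y (Suc j)))"
    and xf_def: "\<forall>j. xf (Suc j) = xg j + (2 * \<tau> / (2 - \<tau>)) *\<^sub>R (x (Suc j) - x j)"
  shows "let ystar = - gF xstar;
             \<Psi> = (\<lambda>j. 1 / \<eta> * (norm (x j - xstar))\<^sup>2
                  + ((1 / \<theta>) *\<^sub>R pinv W (y j - ystar)
                      - (inverse (1 + \<eta> * \<alpha>) * \<eta>) *\<^sub>R (y j - ystar)) \<bullet> (y j - ystar)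
                  + 2 * (1 - \<tau>) / \<tau> * bregman F gF (xf j) xstar)
         in \<Psi> (Suc k) \<le> inverse (1 + 1/4 * min (sqrt (\<mu> / L * (lambda_min_pos W / lambda_max W)))
                                        (lambda_min_pos W / lambda_max W)) * \<Psi> k"
proof -
  have so: "symop W" unfolding symop_def using W_lin W_sym W_psd by blast
  interpret symop W by (rule so)
  have Wxs: "W xstar = 0" using xstar_mem W_ker by blast
  obtain i0 i1 :: 'n where i01: "i0 \<noteq> i1"
  proof -
    have "\<not> (\<forall>a\<in>(UNIV::'n set). \<forall>b\<in>UNIV. a = b)"
      using n2 card_le_Suc0_iff_eq[of "UNIV::'n set"] by simp
    then show ?thesis using that by blast
  qed
  have nz: "\<exists>u. W u \<noteq> 0"
  proof
    define u :: "real^'d^'n" where "u = (\<chi> i. if i = i0 then (\<chi> j. 1) else 0)"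
    have "u $ i0 \<noteq> u $ i1" unfolding u_def using i01 by (simp add: vec_eq_iff)
    then have "u \<notin> consensus" unfolding consensus_def by blast
    then show "W u \<noteq> 0" using W_ker by blast
  qed
  have L0: "0 \<le> L" using mu_pos mu_le_L by simp
  have ysr: "- gF xstar \<in> range W"
  proof (rule perp_ker)
    fix u assume Wu: "W u = 0"
    have "gF xstar \<bullet> u = 0"
    proof (rule optimality[OF grad smooth L0])
      fix t :: real
      have "W (xstar + t *\<^sub>R u) = 0" using Wxs Wu by (simp add: Wadd Wscale)
      then have "xstar + t *\<^sub>R u \<in> consensus" using W_ker by blast
      then show "F xstar \<le> F (xstar + t *\<^sub>R u)" using xstar_min by blast
    qed
    then show "- gF xstar \<bullet> u = 0" by simp
  qed
  have yr: "y j \<in> range W" for j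
  proof (induction j)
    case 0 then show ?case by (rule y0)
  next
    case (Suc j)
    have "\<theta> *\<^sub>R W (xh j) = W (\<theta> *\<^sub>R xh j)" by (simp add: Wscale)
    then have "\<theta> *\<^sub>R W (xh j) \<in> range W" by (metis rangeI)
    then show ?case unfolding y_def[rule_format] using Suc subspace_range by (simp add: subspace_add)
  qed
  have st: "(\<lambda>x y xf. 1 / \<eta> * (norm (x - xstar))\<^sup>2
            + ((1 / \<theta>) *\<^sub>R pinv W (y - - gF xstar) - (inverse (1 + \<eta> * \<mu>) * \<eta>) *\<^sub>R (y - - gF xstar)) \<bullet> (y - - gF xstar)
            + 2 * (1 - \<tau>) / \<tau> * bregman F gF xf xstar) (x (Suc k)) (y (Suc k)) (xf (Suc k))
       \<le> inverse (1 + 1/4 * min (sqrt (\<mu> / L * (lambda_min_pos W / lambda_max W))) (lambda_min_pos W / lambda_max W))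
          * (\<lambda>x y xf. 1 / \<eta> * (norm (x - xstar))\<^sup>2
            + ((1 / \<theta>) *\<^sub>R pinv W (y - - gF xstar) - (inverse (1 + \<eta> * \<mu>) * \<eta>) *\<^sub>R (y - - gF xstar)) \<bullet> (y - - gF xstar)
            + 2 * (1 - \<tau>) / \<tau> * bregman F gF xf xstar) (x k) (y k) (xf k)"
    by (rule step[OF grad smooth sconv mu_pos mu_le_L so nz Wxs ysr yr tau_def eta_def theta_def refl
          xg_def[rule_format] xh_def[rule_format, unfolded alpha_def] y_def[rule_format]
          x_def[rule_format, unfolded alpha_def] xf_def[rule_format]])
  show ?thesis unfolding Let_def alpha_def using st by simp
qed

end
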